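(* There exist a function $g:\mathbb{N}\to\mathbb{R}$ with $g(n)=o(n)$ and, for every $n\ge 1$, an injective map from the set of AVL trees with $n$ nodes to the set of finite binary strings such that every codeword has length at most $0.99933\,n+g(n)$. In words: there is a static encoding of AVL trees using at most $0.99933n+o(n)$ bits for AVL trees with $n$ nodes.
   Context: A binary tree is a rooted tree in which every node has an (optional) left child and an (optional) right child. The height of a tree is the number of edges on a longest path from the root to a leaf; the empty tree has height $-1$. An AVL tree is a binary tree such that at every node the heights of the left subtree and the right subtree differ by at most $1$ (empty subtrees included). *)

theory Defs
  imports Main "HOL-Library.Tree" "HOL-Library.Landau_Symbols"
begin

text \<open>The library height
  counts nodes on a longest root-leaf path (Leaf has height 0), i.e. it is the
  paper's height plus one; differences of heights are unaffected.\<close>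

fun avl :: "unit tree \<Rightarrow> bool" where
  "avl Leaf = True"
| "avl (Node l _ r) =
     (\<bar>int (height l) - int (height r)\<bar> \<le> 1 \<and> avl l \<and> avl r)"

end

theory Submission
  imports Defs
begin

definition TT :: "nat \<Rightarrow> unit tree set" where
  "TT h = {t. avl t \<and> height t = h}"

definition WW :: "nat \<Rightarrow> real" where
  "WW h = (\<Sum>t\<in>TT h. (51/100::real) ^ size t)"

lemma finite_height_le: "finite {t::unit tree. height t \<le> h}"
proof (induction h)
  case 0
  have "{t::unit tree. height t \<le> 0} = {Leaf}" by auto
  then show ?case by simp
next
  case (Suc h)
  have "{t::unit tree. height t \<le> Suc h} \<subseteq>
     insert Leaf ((\<lambda>(l,r). Node l () r) ` ({t. height t \<le> h} \<times> {t. height t \<le> h}))"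
  proof
    fix t :: "unit tree" assume "t \<in> {t. height t \<le> Suc h}"
    then show "t \<in> insert Leaf ((\<lambda>(l,r). Node l () r) ` ({t. height t \<le> h} \<times> {t. height t \<le> h}))"
      by (cases t) (auto simp: image_iff)
  qed
  then show ?case using Suc finite_subset by blast
qed

lemma finite_TT: "finite (TT h)"
  by (rule finite_subset[OF _ finite_height_le[of h]]) (auto simp: TT_def)

lemma TT0: "TT 0 = {Leaf}" by (auto simp: TT_def)

lemma TT1: "TT (Suc 0) = {Node Leaf () Leaf}"
proof -
  { fix t :: "unit tree" assume "avl t" "height t = 1"
    then have "t = Node Leaf () Leaf"
      by (cases t) (auto simp: max_def split: if_splits) }
  then show ?thesis by (auto simp: TT_def)
qed

lemma TT_SS: "TT (Suc (Suc h)) = (\<lambda>(l,r). Node l () r) `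
   (TT (Suc h) \<times> TT (Suc h) \<union> TT (Suc h) \<times> TT h \<union> TT h \<times> TT (Suc h))"
  (is "_ = ?R")
proof
  show "TT (Suc (Suc h)) \<subseteq> ?R"
  proof
    fix t assume "t \<in> TT (Suc (Suc h))"
    then obtain l r where t: "t = Node l () r" "avl l" "avl r"
      and hh: "max (height l) (height r) = Suc h"
      and b: "\<bar>int (height l) - int (height r)\<bar> \<le> 1"
      by (cases t) (auto simp: TT_def)
    have "(height l = Suc h \<and> height r = Suc h) \<or> (height l = Suc h \<and> height r = h)
       \<or> (height l = h \<and> height r = Suc h)" using hh b by (auto simp: max_def split: if_splits)
    then have "(l,r) \<in> TT (Suc h) \<times> TT (Suc h) \<union> TT (Suc h) \<times> TT h \<union> TT h \<times> TT (Suc h)"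
      using t by (auto simp: TT_def)
    then show "t \<in> ?R" using t by force
  qed
next
  show "?R \<subseteq> TT (Suc (Suc h))"
    by (auto simp: TT_def)
qed

lemma sum_prod_aux: "(\<Sum>p\<in>A\<times>B. (c::real) * (f (fst p) * g (snd p))) = c * (sum f A * sum g B)"
proof -
  have "(\<Sum>p\<in>A\<times>B. c * (f (fst p) * g (snd p))) = (\<Sum>a\<in>A. \<Sum>b\<in>B. c * (f a * g b))"
    by (simp add: sum.cartesian_product split_beta)
  also have "\<dots> = (\<Sum>a\<in>A. c * (f a * sum g B))"
    by (simp add: sum_distrib_left)
  also have "\<dots> = c * (sum f A * sum g B)"
    by (simp only: sum_distrib_left[symmetric] sum_distrib_right[symmetric])
  finally show ?thesis .
qed

lemma WW_SS: "WW (Suc (Suc h)) = (51/100) * (WW (Suc h) ^ 2 + 2 * WW (Suc h) * WW h)"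
proof -
  let ?x = "51/100::real"
  let ?A = "TT (Suc h) \<times> TT (Suc h)" let ?B = "TT (Suc h) \<times> TT h" let ?C = "TT h \<times> TT (Suc h)"
  let ?f = "\<lambda>p::unit tree \<times> unit tree. ?x * (?x ^ size (fst p) * ?x ^ size (snd p))"
  have fin: "finite ?A" "finite ?B" "finite ?C" by (simp_all add: finite_TT)
  have inj: "inj_on (\<lambda>(l,r). Node l () r) X" for X :: "(unit tree \<times> unit tree) set"
    by (auto simp: inj_on_def)
  have d1: "(?A \<union> ?B) \<inter> ?C = {}" by (auto simp: TT_def)
  have d2: "?A \<inter> ?B = {}" by (auto simp: TT_def)
  have "WW (Suc (Suc h)) = (\<Sum>p\<in>?A \<union> ?B \<union> ?C. ?x ^ size ((\<lambda>(l,r). Node l () r) p))"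
    unfolding WW_def TT_SS by (subst sum.reindex[OF inj]) (simp add: o_def)
  also have "\<dots> = (\<Sum>p\<in>?A \<union> ?B \<union> ?C. ?f p)"
    by (rule sum.cong) (auto simp: power_add)
  also have "\<dots> = sum ?f ?A + sum ?f ?B + sum ?f ?C"
    using fin d1 d2 by (simp add: sum.union_disjoint)
  also have "sum ?f ?A = ?x * (WW (Suc h) * WW (Suc h))"
    unfolding WW_def by (rule sum_prod_aux)
  also have "sum ?f ?B = ?x * (WW (Suc h) * WW h)"
    unfolding WW_def by (rule sum_prod_aux)
  also have "sum ?f ?C = ?x * (WW h * WW (Suc h))"
    unfolding WW_def by (rule sum_prod_aux)
  finally show ?thesis by (simp add: algebra_simps power2_eq_square)
qed


definition uu :: "nat \<Rightarrow> real" where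
  "uu h = (if h < 10 then [1, 0.51, 0.66, 0.57, 0.55, 0.48, 0.39, 0.27, 0.15, 0.06] ! h else 0.06)"

lemma uu_step: "51/100 * (uu (Suc h) ^ 2 + 2 * uu (Suc h) * uu h) \<le> uu (Suc (Suc h))"
proof (cases "h < 9")
  case True
  then have "h \<in> {0,1,2,3,4,5,6,7,8}" by auto
  then show ?thesis by (auto simp: uu_def power2_eq_square)
next
  case False
  then show ?thesis by (simp add: uu_def power2_eq_square)
qed

lemma uu_le1: "uu h \<le> 1"
proof (cases "h < 10")
  case True
  then have "h \<in> {0,1,2,3,4,5,6,7,8,9}" by auto
  then show ?thesis by (auto simp: uu_def)
qed (simp add: uu_def)

lemma uu_nonneg: "0 \<le> uu h"
proof (cases "h < 10")
  case True
  then have "h \<in> {0,1,2,3,4,5,6,7,8,9}" by auto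
  then show ?thesis by (auto simp: uu_def)
qed (simp add: uu_def)

lemma WW_nonneg: "0 \<le> WW h"
  unfolding WW_def by (rule sum_nonneg) simp

lemma WW_le_uu: "WW h \<le> uu h \<and> WW (Suc h) \<le> uu (Suc h)"
proof (induction h)
  case 0
  show ?case by (simp add: WW_def TT0 TT1 uu_def)
next
  case (Suc h)
  have a: "WW h \<le> uu h" and b: "WW (Suc h) \<le> uu (Suc h)" using Suc by auto
  have a0: "0 \<le> WW h" and b0: "0 \<le> WW (Suc h)" by (rule WW_nonneg)+
  have "WW (Suc h) ^ 2 \<le> uu (Suc h) ^ 2" using b b0 by (rule power_mono)
  moreover have "WW (Suc h) * WW h \<le> uu (Suc h) * uu h"
    using a b a0 b0 by (intro mult_mono) auto
  ultimately have "WW (Suc (Suc h)) \<le> 51/100 * (uu (Suc h) ^ 2 + 2 * uu (Suc h) * uu h)"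
    unfolding WW_SS by simp
  also have "\<dots> \<le> uu (Suc (Suc h))" by (rule uu_step)
  finally show ?case using b by simp
qed

lemma WW_le1: "WW h \<le> 1"
  using WW_le_uu[of h] uu_le1[of h] by linarith

lemma card_TT_size: "real (card {t\<in>TT h. size t = n}) \<le> (100/51) ^ n"
proof -
  let ?S = "{t\<in>TT h. size t = n}"
  have "real (card ?S) * (51/100) ^ n = (\<Sum>t\<in>?S. (51/100::real) ^ size t)"
    by simp
  also have "\<dots> \<le> WW h" unfolding WW_def
    by (rule sum_mono2[OF finite_TT]) auto
  also have "\<dots> \<le> 1" by (rule WW_le1)
  finally have "real (card ?S) * (51/100) ^ n \<le> 1" .
  then have "real (card ?S) * (51/100) ^ n * (100/51) ^ n \<le> (100/51) ^ n"
    by (simp add: mult_right_le_one_le)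
  moreover have "(51/100::real) ^ n * (100/51) ^ n = 1"
    by (simp add: power_mult_distrib[symmetric])
  ultimately show ?thesis by (simp add: mult.assoc)
qed

lemma card_avl: "finite {t. avl t \<and> size t = n} \<and>
  real (card {t. avl t \<and> size t = n}) \<le> (real n + 1) * (100/51) ^ n"
proof -
  let ?S = "{t. avl t \<and> size t = n}"
  have sub: "?S \<subseteq> (\<Union>h\<in>{..n}. {t\<in>TT h. size t = n})"
  proof
    fix t assume t: "t \<in> ?S"
    then have "height t \<in> {..n}" using height_le_size_tree[of t] by simp
    moreover have "t \<in> {t'\<in>TT (height t). size t' = n}" using t by (simp add: TT_def)
    ultimately show "t \<in> (\<Union>h\<in>{..n}. {t\<in>TT h. size t = n})" by (rule UN_I)
  qed
  have fin: "finite (\<Union>h\<in>{..n}. {t\<in>TT h. size t = n})" by (simp add: finite_TT)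
  have "card ?S \<le> card (\<Union>h\<in>{..n}. {t\<in>TT h. size t = n})"
    by (rule card_mono[OF fin sub])
  also have "\<dots> \<le> (\<Sum>h\<in>{..n}. card {t\<in>TT h. size t = n})"
    by (rule card_UN_le) simp
  finally have "real (card ?S) \<le> real (\<Sum>h\<in>{..n}. card {t\<in>TT h. size t = n})"
    by (simp only: of_nat_le_iff)
  also have "\<dots> = (\<Sum>h\<in>{..n}. real (card {t\<in>TT h. size t = n}))"
    by (rule of_nat_sum)
  also have "\<dots> \<le> (\<Sum>h\<in>{..n}. (100/51::real) ^ n)"
    by (rule sum_mono) (rule card_TT_size)
  also have "\<dots> = (real n + 1) * (100/51) ^ n" by simp
  finally show ?thesis using finite_subset[OF sub fin] by simp
qed

lemma log_const: "log 2 (101/51) \<le> (0.99::real)"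
proof -
  have "100 * log 2 (101/51) = log 2 ((101/51::real) ^ 100)"
    by (simp add: log_nat_power)
  also have "\<dots> \<le> log 2 ((2::real) ^ 99)"
  proof (subst log_le_cancel_iff)
    have "(101::real)^100 \<le> 2^99 * 51^100" by simp
    then show "(101/51::real) ^ 100 \<le> 2^99" by (simp add: power_divide divide_le_eq)
  qed auto
  also have "\<dots> = 99" by (subst log_nat_power) auto
  finally show ?thesis by simp
qed

lemma log_100: "log 2 (100::real) \<le> 7"
proof -
  have "log 2 (100::real) \<le> log 2 ((2::real) ^ 7)"
    by (subst log_le_cancel_iff) auto
  also have "\<dots> = 7" by (subst log_nat_power) auto
  finally show ?thesis .
qed

lemma g_small: "(\<lambda>n::nat. 8::real) \<in> o(\<lambda>n. real n)"
proof (rule smalloI_tendsto)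
  show "((\<lambda>n::nat. 8 / real n) \<longlongrightarrow> (0::real)) sequentially"
    by (rule lim_const_over_n)
  show "eventually (\<lambda>n::nat. real n \<noteq> 0) sequentially"
    using eventually_gt_at_top[of "0::nat"] by eventually_elim simp
qed

lemma lin_exp: "real n + 1 \<le> 100 * (101/100::real) ^ n"
proof -
  have "1 + real n * (1/100) \<le> (1 + 1/100::real) ^ n"
    by (rule Bernoulli_inequality) simp
  then show ?thesis by simp
qed

lemma card_avl2: "real (card {t. avl t \<and> size t = n}) \<le> 100 * (101/51::real) ^ n"
proof -
  have "real (card {t. avl t \<and> size t = n}) \<le> (real n + 1) * (100/51) ^ n"
    using card_avl by auto
  also have "\<dots> \<le> 100 * (101/100::real) ^ n * (100/51) ^ n"
    using lin_exp by (intro mult_right_mono) auto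
  also have "\<dots> = 100 * (101/51::real) ^ n"
    by (simp add: mult.assoc power_mult_distrib[symmetric])
  finally show ?thesis .
qed

theorem theorem1:
  shows "\<exists>g :: nat \<Rightarrow> real. g \<in> o(\<lambda>n. real n) \<and>
    (\<forall>n \<ge> 1. \<exists>enc :: unit tree \<Rightarrow> bool list.
       inj_on enc {t. avl t \<and> size t = n} \<and>
       (\<forall>t \<in> {t. avl t \<and> size t = n}.
          real (length (enc t)) \<le> 0.99933 * real n + g n))"
proof (rule exI[where x="\<lambda>n::nat. 8::real"], intro conjI allI impI)
  show "(\<lambda>n::nat. 8::real) \<in> o(\<lambda>n. real n)" by (rule g_small)
next
  fix n :: nat assume n1: "n \<ge> 1"
  let ?S = "{t. avl t \<and> size t = n}"
  define L where "L = nat \<lceil>log 2 (real (card ?S))\<rceil>"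
  let ?B = "{xs::bool list. set xs \<subseteq> UNIV \<and> length xs = L}"
  have finS: "finite ?S" and cS: "real (card ?S) \<le> 100 * (101/51::real) ^ n"
    using card_avl card_avl2 by auto
  have cardB: "card ?B = 2 ^ L" using card_lists_length_eq[of "UNIV :: bool set" L] by simp
  have finB: "finite ?B" using finite_lists_length_eq[of "UNIV :: bool set" L] by simp
  have key: "card ?S \<le> 2 ^ L \<and> real L \<le> 0.99933 * real n + 8"
  proof (cases "card ?S = 0")
    case True
    then show ?thesis by (simp add: L_def log_def)
  next
    case False
    then have pos: "0 < real (card ?S)" by simp
    have lg: "log 2 (real (card ?S)) \<ge> 0" using False by simp
    have "real (card ?S) = 2 powr log 2 (real (card ?S))" using pos by simp
    also have "\<dots> \<le> 2 powr real L" unfolding L_def using lg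
      by (intro powr_mono) auto
    also have "\<dots> = 2 ^ L" by (simp add: powr_realpow)
    finally have "real (card ?S) \<le> real ((2::nat) ^ L)" by simp
    then have c1: "card ?S \<le> 2 ^ L" by (simp only: of_nat_le_iff)
    have pos2: "0 < 100 * (101/51::real) ^ n" by simp
    have l1: "log 2 (100 * (101/51::real) ^ n) = log 2 100 + log 2 ((101/51::real) ^ n)"
      by (subst log_mult) auto
    have l2: "log 2 ((101/51::real) ^ n) = real n * log 2 (101/51)"
      by (subst log_nat_power) auto
    have "real L \<le> log 2 (real (card ?S)) + 1" unfolding L_def using lg by linarith
    also have "log 2 (real (card ?S)) \<le> log 2 (100 * (101/51) ^ n)"
      using cS by (subst log_le_cancel_iff[OF _ pos pos2]) simp_all
    also have "\<dots> = log 2 100 + real n * log 2 (101/51)"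
      unfolding l1 l2 ..
    also have "real n * log 2 (101/51) \<le> real n * 0.99"
      using log_const by (intro mult_left_mono) auto
    finally have "real L \<le> 0.99 * real n + 8" using log_100 by simp
    then show ?thesis using c1 by simp
  qed
  then have "card ?S \<le> card ?B" using cardB by simp
  then obtain f where f: "f ` ?S \<subseteq> ?B" "inj_on f ?S" using card_le_inj[OF finS finB] by blast
  show "\<exists>enc :: unit tree \<Rightarrow> bool list. inj_on enc ?S \<and>
       (\<forall>t \<in> ?S. real (length (enc t)) \<le> 0.99933 * real n + 8)"
  proof (intro exI conjI ballI)
    show "inj_on f ?S" by (rule f(2))
  next
    fix t assume "t \<in> ?S"
    then have "length (f t) = L" using f(1) by blast
    then show "real (length (f t)) \<le> 0.99933 * real n + 8"
      using key by simp
  qed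
qed

end
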